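(* Let $2\le n\le m$ be integers with $\gamma_{2t}(K_n\Box K_m)<2n$. Then \[ \gamma_{2t}(K_n\Box K_m)\le\gamma_{2t}(K_{n+1}\Box K_m)\le\gamma_{2t}(K_n\Box K_m)+1. \]
   Context: For a graph $G=(V,E)$, a set $S\subseteq V$ is a total $2$-dominating set if every vertex of $V$ (including those in $S$) is adjacent to at least $2$ vertices of $S$; $\gamma_{2t}(G)$ is the minimum cardinality of such a set. $G\Box H$ denotes the Cartesian product: vertex set $V(G)\times V(H)$, with $(u_1,v_1)\sim(u_2,v_2)$ iff either $u_1=u_2$ and $v_1\sim v_2$, or $v_1=v_2$ and $u_1\sim u_2$. $K_n$ is the complete graph on $n$ vertices. *)

theory Defs
  imports Main
begin

definition complete_adj :: "nat \<Rightarrow> nat \<Rightarrow> bool" where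
  "complete_adj u v \<longleftrightarrow> u \<noteq> v"

definition K_verts :: "nat \<Rightarrow> nat set" where
  "K_verts n = {0..<n}"

definition cart_adj :: "('a \<Rightarrow> 'a \<Rightarrow> bool) \<Rightarrow> ('b \<Rightarrow> 'b \<Rightarrow> bool) \<Rightarrow> 'a \<times> 'b \<Rightarrow> 'a \<times> 'b \<Rightarrow> bool" where
  "cart_adj adjG adjH x y \<longleftrightarrow>
     (fst x = fst y \<and> adjH (snd x) (snd y)) \<or> (snd x = snd y \<and> adjG (fst x) (fst y))"

definition total_2_dominating :: "'a set \<Rightarrow> ('a \<Rightarrow> 'a \<Rightarrow> bool) \<Rightarrow> 'a set \<Rightarrow> bool" where
  "total_2_dominating V adj S \<longleftrightarrow>
     S \<subseteq> V \<and> (\<forall>v\<in>V. card {u\<in>S. adj v u} \<ge> 2)"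

definition gamma_2t :: "'a set \<Rightarrow> ('a \<Rightarrow> 'a \<Rightarrow> bool) \<Rightarrow> nat" where
  "gamma_2t V adj = Min {card S | S. total_2_dominating V adj S}"

definition gamma_2t_KK :: "nat \<Rightarrow> nat \<Rightarrow> nat" where
  "gamma_2t_KK n m = gamma_2t (K_verts n \<times> K_verts m) (cart_adj complete_adj complete_adj)"

end

theory Submission
  imports Defs
begin

abbreviation KA :: "nat \<times> nat \<Rightarrow> nat \<times> nat \<Rightarrow> bool" where
  "KA \<equiv> cart_adj complete_adj complete_adj"

definition rowc :: "(nat \<times> nat) set \<Rightarrow> nat \<Rightarrow> nat set" where
  "rowc S p = {q. (p,q) \<in> S}"
definition colc :: "(nat \<times> nat) set \<Rightarrow> nat \<Rightarrow> nat set" where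
  "colc S q = {p. (p,q) \<in> S}"

lemma adj_iff: "KA (p,q) (p',q') \<longleftrightarrow> (p = p' \<and> q \<noteq> q') \<or> (q = q' \<and> p \<noteq> p')"
  by (auto simp: cart_adj_def complete_adj_def)

lemma fin_rowc: "finite S \<Longrightarrow> finite (rowc S p)"
proof -
  assume "finite S"
  have "rowc S p \<subseteq> snd ` S" by (force simp: rowc_def)
  thus ?thesis using \<open>finite S\<close> finite_subset by blast
qed

lemma fin_colc: "finite S \<Longrightarrow> finite (colc S p)"
proof -
  assume "finite S"
  have "colc S p \<subseteq> fst ` S" by (force simp: colc_def)
  thus ?thesis using \<open>finite S\<close> finite_subset by blast
qed

lemma nb_card:
  assumes "finite S"
  shows "card {u\<in>S. KA (p,q) u} = card (rowc S p - {q}) + card (colc S q - {p})"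
proof -
  have e: "{u\<in>S. KA (p,q) u} = Pair p ` (rowc S p - {q}) \<union> (\<lambda>x. (x,q)) ` (colc S q - {p})"
  proof (rule set_eqI)
    fix u :: "nat \<times> nat"
    obtain a b where u: "u = (a,b)" by force
    show "u \<in> {u\<in>S. KA (p,q) u} \<longleftrightarrow> u \<in> Pair p ` (rowc S p - {q}) \<union> (\<lambda>x. (x,q)) ` (colc S q - {p})"
      unfolding u by (auto simp: rowc_def colc_def adj_iff image_iff)
  qed
  have "card (Pair p ` (rowc S p - {q}) \<union> (\<lambda>x. (x,q)) ` (colc S q - {p}))
      = card (Pair p ` (rowc S p - {q})) + card ((\<lambda>x. (x,q)) ` (colc S q - {p}))"
    by (rule card_Un_disjoint) (use assms fin_rowc fin_colc in auto)
  also have "\<dots> = card (rowc S p - {q}) + card (colc S q - {p})"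
    by (simp add: card_image inj_on_def)
  finally show ?thesis using e by simp
qed

lemma card_rows:
  assumes "S \<subseteq> {..<N} \<times> {..<M}"
  shows "card S = (\<Sum>i<N. card (rowc S i))"
proof -
  have fS: "finite S" using assms finite_subset by blast
  have "S = (SIGMA i:{..<N}. rowc S i)" using assms by (auto simp: rowc_def)
  moreover have "\<forall>i\<in>{..<N}. finite (rowc S i)"
    using fS fin_rowc by blast
  ultimately show ?thesis using card_SigmaI[of "{..<N}" "rowc S"] by simp
qed

lemma card_cols:
  assumes "S \<subseteq> {..<N} \<times> {..<M}"
  shows "card S = (\<Sum>j<M. card (colc S j))"
proof -
  have fS: "finite S" using assms finite_subset by blast
  have e: "S = prod.swap ` (SIGMA j:{..<M}. colc S j)" using assms by (auto simp: colc_def image_iff)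
  moreover have "\<forall>i\<in>{..<M}. finite (colc S i)"
    using fS fin_colc by blast
  ultimately have "card (SIGMA j:{..<M}. colc S j) = (\<Sum>j<M. card (colc S j))"
    using card_SigmaI[of "{..<M}" "colc S"] by simp
  moreover have "card S = card (SIGMA j:{..<M}. colc S j)"
    by (subst e, rule card_image) (simp add: swap_inj_on)
  ultimately show ?thesis by simp
qed

lemma KV: "K_verts N = {..<N}" by (auto simp: K_verts_def)


lemma t2d_def': "total_2_dominating (K_verts N \<times> K_verts m) KA S \<longleftrightarrow>
   S \<subseteq> {..<N} \<times> {..<m} \<and> (\<forall>p<N. \<forall>q<m. 2 \<le> card {u\<in>S. KA (p,q) u})"
  by (auto simp: total_2_dominating_def KV)

lemma gamma_le:
  assumes "total_2_dominating (K_verts N \<times> K_verts m) KA S"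
  shows "gamma_2t_KK N m \<le> card S"
proof -
  have "{card S |S. total_2_dominating (K_verts N \<times> K_verts m) KA S} \<subseteq> card ` Pow (K_verts N \<times> K_verts m)"
    by (auto simp: total_2_dominating_def)
  hence "finite {card S |S. total_2_dominating (K_verts N \<times> K_verts m) KA S}"
    by (rule finite_subset) (simp add: K_verts_def)
  thus ?thesis unfolding gamma_2t_KK_def gamma_2t_def
    by (rule Min_le) (use assms in blast)
qed

lemma two_card:
  assumes "finite A" "x \<in> A" "y \<in> A" "x \<noteq> y"
  shows "2 \<le> card A"
proof -
  have "card {x,y} = 2" using assms by simp
  moreover have "card {x,y} \<le> card A" using assms by (intro card_mono) auto
  ultimately show ?thesis by simp
qed

lemma gamma_ex:
  assumes "2 \<le> N" "2 \<le> m"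
  shows "\<exists>S. total_2_dominating (K_verts N \<times> K_verts m) KA S \<and> card S = gamma_2t_KK N m"
proof -
  let ?C = "{card S |S. total_2_dominating (K_verts N \<times> K_verts m) KA S}"
  have "?C \<subseteq> card ` Pow (K_verts N \<times> K_verts m)"
    by (auto simp: total_2_dominating_def)
  hence fin: "finite ?C"
    by (rule finite_subset) (simp add: K_verts_def)
  have "total_2_dominating (K_verts N \<times> K_verts m) KA ({..<N} \<times> {..<m})"
    unfolding t2d_def'
  proof (intro conjI allI impI)
    fix p q assume pq: "p < N" "q < m"
    define p' where "p' = (if p = 0 then 1 else (0::nat))"
    define q' where "q' = (if q = 0 then 1 else (0::nat))"
    have "p' < N" "p' \<noteq> p" "q' < m" "q' \<noteq> q" using assms by (auto simp: p'_def q'_def)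
    then show "2 \<le> card {u \<in> {..<N} \<times> {..<m}. KA (p, q) u}"
      using pq by (intro two_card[where x="(p',q)" and y="(p,q')"]) (auto simp: adj_iff)
  qed simp
  hence ne: "?C \<noteq> {}" by blast
  have "Min ?C \<in> ?C" using fin ne by (rule Min_in)
  thus ?thesis unfolding gamma_2t_KK_def gamma_2t_def by auto
qed

lemma col_nonempty:
  assumes "total_2_dominating (K_verts N \<times> K_verts m) KA S" "card S < 2*N" "j<m"
  shows "\<exists>i. (i,j) \<in> S"
proof (rule ccontr)
  assume "\<not> (\<exists>i. (i,j) \<in> S)"
  hence ce: "colc S j = {}" by (auto simp: colc_def)
  have sub: "S \<subseteq> {..<N} \<times> {..<m}" and d: "\<forall>p<N. \<forall>q<m. 2 \<le> card {u\<in>S. KA (p,q) u}"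
    using assms(1) by (auto simp: t2d_def')
  have fS: "finite S" using sub finite_subset by blast
  have "\<forall>i<N. 2 \<le> card (rowc S i)"
  proof (intro allI impI)
    fix i assume "i < N"
    hence "2 \<le> card (rowc S i - {j}) + card (colc S j - {i})"
      using d assms(3) nb_card[OF fS] by metis
    also have "\<dots> \<le> card (rowc S i)" using ce fin_rowc[OF fS] by (simp add: card_Diff1_le)
    finally show "2 \<le> card (rowc S i)" .
  qed
  hence "(\<Sum>i<N. 2) \<le> (\<Sum>i<N. card (rowc S i))" by (intro sum_mono) auto
  thus False using card_rows[OF sub] assms(2) by simp
qed

lemma col_two:
  assumes "total_2_dominating (K_verts N \<times> K_verts m) KA S" "card S < 2*N" "0<m"
  shows "\<exists>j<m. \<exists>a b. a \<noteq> b \<and> (a,j) \<in> S \<and> (b,j) \<in> S"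
proof (rule ccontr)
  assume "\<not> ?thesis"
  hence one: "\<forall>j<m. \<forall>a b. (a,j) \<in> S \<longrightarrow> (b,j) \<in> S \<longrightarrow> a = b" by blast
  have sub: "S \<subseteq> {..<N} \<times> {..<m}" and d: "\<forall>p<N. \<forall>q<m. 2 \<le> card {u\<in>S. KA (p,q) u}"
    using assms(1) by (auto simp: t2d_def')
  have fS: "finite S" using sub finite_subset by blast
  have "\<forall>i<N. 2 \<le> card (rowc S i)"
  proof (intro allI impI)
    fix i assume iN: "i < N"
    show "2 \<le> card (rowc S i)"
    proof (rule ccontr)
      assume "\<not> 2 \<le> card (rowc S i)"
      hence le1: "card (rowc S i) \<le> Suc 0" by simp
      show False
      proof (cases "rowc S i = {}")
        case True
        have "card (colc S 0 - {i}) \<le> card (colc S 0)" using fin_colc[OF fS] by (simp add: card_Diff1_le)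
        also have "\<dots> \<le> Suc 0" using one assms(3) fin_colc[OF fS]
          by (subst card_le_Suc0_iff_eq) (auto simp: colc_def)
        finally have "card (colc S 0 - {i}) \<le> 1" by simp
        moreover have "2 \<le> card (rowc S i - {0}) + card (colc S 0 - {i})"
          using d assms(3) iN nb_card[OF fS] by metis
        ultimately show False using True by simp
      next
        case False
        then obtain c where c: "c \<in> rowc S i" by blast
        have r0: "rowc S i - {c} = {}" using le1 c fin_rowc[OF fS] card_le_Suc0_iff_eq by blast
        have cS: "(i,c) \<in> S" using c by (simp add: rowc_def)
        hence "c < m" using sub by auto
        have c0: "colc S c - {i} = {}" using one \<open>c < m\<close> cS by (auto simp: colc_def)
        have "2 \<le> card (rowc S i - {c}) + card (colc S c - {i})"
          using d \<open>c < m\<close> iN nb_card[OF fS] by metis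
        thus False unfolding r0 c0 by simp
      qed
    qed
  qed
  hence "(\<Sum>i<N. 2) \<le> (\<Sum>i<N. card (rowc S i))" by (intro sum_mono) auto
  thus False using card_rows[OF sub] assms(2) by simp
qed


lemma upper:
  assumes "2 \<le> n" "n \<le> m" "gamma_2t_KK n m < 2 * n"
  shows "gamma_2t_KK (n+1) m \<le> gamma_2t_KK n m + 1"
proof -
  obtain S where S: "total_2_dominating (K_verts n \<times> K_verts m) KA S" "card S = gamma_2t_KK n m"
    using gamma_ex assms by (metis le_trans)
  have sub: "S \<subseteq> {..<n} \<times> {..<m}" and d: "\<forall>p<n. \<forall>q<m. 2 \<le> card {u\<in>S. KA (p,q) u}"
    using S(1) by (auto simp: t2d_def')
  have fS: "finite S" using sub finite_subset by blast
  have lt: "card S < 2*n" using S assms by simp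
  obtain j0 a b where j0: "j0 < m" "a \<noteq> b" "(a,j0) \<in> S" "(b,j0) \<in> S"
    using col_two[OF S(1) lt] assms by auto
  let ?S = "insert (n,j0) S"
  have fS': "finite ?S" using fS by simp
  have "total_2_dominating (K_verts (n+1) \<times> K_verts m) KA ?S"
    unfolding t2d_def'
  proof (intro conjI allI impI)
    show "?S \<subseteq> {..<n+1} \<times> {..<m}" using sub j0 by auto
  next
    fix p q assume pq: "p < n+1" "q < m"
    show "2 \<le> card {u\<in>?S. KA (p,q) u}"
    proof (cases "p < n")
      case True
      have "2 \<le> card {u\<in>S. KA (p,q) u}" using d True pq by blast
      also have "\<dots> \<le> card {u\<in>?S. KA (p,q) u}" using fS' by (intro card_mono) auto
      finally show ?thesis .
    next
      case False
      hence pn: "p = n" using pq by simp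
      show ?thesis
      proof (cases "q = j0")
        case True
        have "a < n" "b < n" using j0 sub by auto
        thus ?thesis using pn True j0 fS'
          by (intro two_card[where x="(a,j0)" and y="(b,j0)"]) (auto simp: adj_iff)
      next
        case False
        obtain i where i: "(i,q) \<in> S" using col_nonempty[OF S(1) lt pq(2)] by blast
        have "i < n" using i sub by auto
        thus ?thesis using pn False i fS'
          by (intro two_card[where x="(n,j0)" and y="(i,q)"]) (auto simp: adj_iff)
      qed
    qed
  qed
  hence "gamma_2t_KK (n+1) m \<le> card ?S" by (rule gamma_le)
  also have "\<dots> \<le> card S + 1" using fS by (simp add: card_insert_if)
  finally show ?thesis using S by simp
qed

definition sw :: "nat \<Rightarrow> nat \<Rightarrow> nat \<Rightarrow> nat" where
  "sw r n p = (if p = r then n else if p = n then r else p)"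

lemma sw_sw[simp]: "sw r n (sw r n p) = p" by (simp add: sw_def)
lemma sw_eq[simp]: "sw r n p = sw r n p' \<longleftrightarrow> p = p'" by (metis sw_sw)

definition gsw :: "nat \<Rightarrow> nat \<Rightarrow> nat \<times> nat \<Rightarrow> nat \<times> nat" where
  "gsw r n u = (sw r n (fst u), snd u)"

lemma gsw_gsw[simp]: "gsw r n (gsw r n u) = u" by (simp add: gsw_def)
lemma inj_gsw: "inj (gsw r n)" by (metis gsw_gsw injI)
lemma KA_gsw: "KA (gsw r n u) (gsw r n v) = KA u v"
  by (cases u; cases v) (simp add: gsw_def adj_iff)

lemma shrink:
  assumes sub: "S \<subseteq> {..<n+1} \<times> {..<m}" and r: "r \<le> n" and nr: "\<forall>u\<in>S. fst u \<noteq> r"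
    and d: "\<forall>p q. p \<le> n \<longrightarrow> p \<noteq> r \<longrightarrow> q < m \<longrightarrow> 2 \<le> card {u\<in>S. KA (p,q) u}"
  shows "gamma_2t_KK n m \<le> card S"
proof -
  let ?g = "gsw r n"
  let ?S = "?g ` S"
  have cS: "card ?S = card S" by (rule card_image) (meson inj_gsw inj_on_subset subset_UNIV)
  have "total_2_dominating (K_verts n \<times> K_verts m) KA ?S"
    unfolding t2d_def'
  proof (intro conjI allI impI)
    show "?S \<subseteq> {..<n} \<times> {..<m}"
    proof
      fix x assume "x \<in> ?S"
      then obtain u where u: "u \<in> S" "x = ?g u" by blast
      obtain p q where pq: "u = (p,q)" by force
      have "p \<le> n" "p \<noteq> r" "q < m" using u sub nr pq by auto
      thus "x \<in> {..<n} \<times> {..<m}" using u pq r by (auto simp: gsw_def sw_def)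
    qed
  next
    fix p q assume pq: "p < n" "q < m"
    have e: "{u\<in>?S. KA (p,q) u} = ?g ` {w\<in>S. KA (?g (p,q)) w}"
    proof (rule set_eqI)
      fix x
      show "x \<in> {u\<in>?S. KA (p,q) u} \<longleftrightarrow> x \<in> ?g ` {w\<in>S. KA (?g (p,q)) w}"
      proof
        assume "x \<in> {u\<in>?S. KA (p,q) u}"
        then obtain w where w: "w \<in> S" "x = ?g w" "KA (p,q) x" by blast
        have "KA (?g (p,q)) w" using w KA_gsw[of r n "(p,q)" x] by simp
        thus "x \<in> ?g ` {w\<in>S. KA (?g (p,q)) w}" using w by blast
      next
        assume "x \<in> ?g ` {w\<in>S. KA (?g (p,q)) w}"
        then obtain w where w: "w \<in> S" "x = ?g w" "KA (?g (p,q)) w" by blast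
        have "KA (p,q) x" using w KA_gsw[of r n "?g (p,q)" w] by simp
        thus "x \<in> {u\<in>?S. KA (p,q) u}" using w by blast
      qed
    qed
    have "?g (p,q) = (sw r n p, q)" by (simp add: gsw_def)
    moreover have "sw r n p \<le> n" "sw r n p \<noteq> r" using pq r by (auto simp: sw_def)
    ultimately have "2 \<le> card {w\<in>S. KA (?g (p,q)) w}" using d pq by simp
    also have "\<dots> = card {u\<in>?S. KA (p,q) u}" unfolding e
      by (rule card_image[symmetric]) (meson inj_gsw inj_on_subset subset_UNIV)
    finally show "2 \<le> card {u\<in>?S. KA (p,q) u}" .
  qed
  hence "gamma_2t_KK n m \<le> card ?S" by (rule gamma_le)
  thus ?thesis using cS by simp
qed


lemma lower:
  assumes "2 \<le> n" "n \<le> m" "gamma_2t_KK n m < 2 * n"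
  shows "gamma_2t_KK n m \<le> gamma_2t_KK (n+1) m"
proof -
  obtain T where T: "total_2_dominating (K_verts (n+1) \<times> K_verts m) KA T" "card T = gamma_2t_KK (n+1) m"
    using gamma_ex[of "n+1" m] assms by auto
  have sub: "T \<subseteq> {..<n+1} \<times> {..<m}" and d: "\<forall>p<n+1. \<forall>q<m. 2 \<le> card {u\<in>T. KA (p,q) u}"
    using T(1) by (auto simp: t2d_def')
  have fT: "finite T" using sub finite_subset by blast
  show ?thesis
  proof (cases "2*n \<le> card T")
    case True thus ?thesis using T assms by simp
  next
    case False
    hence lt: "card T < 2*n" by simp
    have lt2: "card T < 2*(n+1)" using lt by simp
    obtain r where r: "r \<le> n" "card (rowc T r) \<le> 1"
    proof (rule ccontr)
      assume "\<not> thesis"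
      have "\<forall>i<n+1. 2 \<le> card (rowc T i)"
      proof (intro allI impI)
        fix i assume "i < n+1"
        hence "i \<le> n" by simp
        show "2 \<le> card (rowc T i)"
        proof (rule ccontr)
          assume "\<not> 2 \<le> card (rowc T i)"
          hence "card (rowc T i) \<le> 1" by simp
          thus False using that \<open>i \<le> n\<close> \<open>\<not> thesis\<close> by blast
        qed
      qed
      hence "(\<Sum>i<n+1. 2) \<le> (\<Sum>i<n+1. card (rowc T i))" by (intro sum_mono) auto
      thus False using card_rows[OF sub] lt2 by simp
    qed
    have d': "\<forall>p q. p \<le> n \<longrightarrow> p \<noteq> r \<longrightarrow> q < m \<longrightarrow> 2 \<le> card {u\<in>T. KA (p,q) u}"
      using d by auto
    show ?thesis
    proof (cases "rowc T r = {}")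
      case True
      have "\<forall>u\<in>T. fst u \<noteq> r" using True by (force simp: rowc_def)
      hence "gamma_2t_KK n m \<le> card T" using shrink[OF sub r(1) _ d'] by blast
      thus ?thesis using T by simp
    next
      case False
      then obtain c where c: "c \<in> rowc T r" by blast
      have only: "rowc T r = {c}" using c r(2) fin_rowc[OF fT] card_le_Suc0_iff_eq by auto
      have rcT: "(r,c) \<in> T" using c by (simp add: rowc_def)
      hence cm: "c < m" using sub by auto
      have rowr: "\<And>q. (r,q) \<in> T \<Longrightarrow> q = c" using only by (auto simp: rowc_def)
      obtain i where i: "i \<le> n" "i \<noteq> r" "(i,c) \<notin> T"
      proof (rule ccontr)
        assume "\<not> thesis"
        hence full: "\<forall>x\<le>n. x \<noteq> r \<longrightarrow> (x,c) \<in> T" using that by blast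
        have "colc T c = {..<n+1}" using full rcT sub by (auto simp: colc_def less_Suc_eq_le)
        hence cc: "card (colc T c) = n + 1" by simp
        have "\<forall>j<m. 1 + (if j = c then n else 0) \<le> card (colc T j)"
        proof (intro allI impI)
          fix j assume "j < m"
          show "1 + (if j = c then n else 0) \<le> card (colc T j)"
          proof (cases "j = c")
            case True thus ?thesis using cc by simp
          next
            case False
            obtain x where "(x,j) \<in> T" using col_nonempty[OF T(1) lt2 \<open>j<m\<close>] by blast
            hence "colc T j \<noteq> {}" by (auto simp: colc_def)
            hence "0 < card (colc T j)" using fin_colc[OF fT] by (simp add: card_gt_0_iff)
            thus ?thesis using False by simp
          qed
        qed
        hence "(\<Sum>j<m. 1 + (if j = c then n else 0)) \<le> (\<Sum>j<m. card (colc T j))"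
          by (intro sum_mono) auto
        moreover have "(\<Sum>j<m. 1 + (if j = c then n else 0)) = m + n"
        proof -
          have "(\<Sum>j<m. 1 + (if j = c then n else 0)) = (\<Sum>j<m. (1::nat)) + (\<Sum>j<m. (if j = c then n else 0))"
            by (rule sum.distrib)
          moreover have "(\<Sum>j<m. (if j = c then n else 0)) = n" using cm by simp
          ultimately show ?thesis by simp
        qed
        ultimately show False using card_cols[OF sub] lt assms by simp
      qed
      let ?S = "insert (i,c) (T - {(r,c)})"
      have fS: "finite ?S" using fT by simp
      have cS: "card ?S = card T" 
      proof -
        have "(i,c) \<notin> T - {(r,c)}" using i by simp
        hence "card ?S = card (T - {(r,c)}) + 1" using fT by simp
        also have "\<dots> = card T" using card_Suc_Diff1[OF fT rcT] by simp
        finally show ?thesis .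
      qed
      have subS: "?S \<subseteq> {..<n+1} \<times> {..<m}" using sub i cm by auto
      have nr: "\<forall>u\<in>?S. fst u \<noteq> r" using i rowr by auto
      have dS: "\<forall>p q. p \<le> n \<longrightarrow> p \<noteq> r \<longrightarrow> q < m \<longrightarrow> 2 \<le> card {u\<in>?S. KA (p,q) u}"
      proof (intro allI impI)
        fix p q assume pq: "p \<le> n" "p \<noteq> r" "q < m"
        show "2 \<le> card {u\<in>?S. KA (p,q) u}"
        proof (cases "q = c")
          case False
          have "2 \<le> card {u\<in>T. KA (p,q) u}" using d' pq by blast
          also have "\<dots> \<le> card {u\<in>?S. KA (p,q) u}"
            using fS pq False by (intro card_mono) (auto simp: adj_iff)
          finally show ?thesis .
        next
          case qc: True
          show ?thesis
          proof (cases "p = i")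
            case True
            have "2 \<le> card {u\<in>T. KA (r,c) u}" using d r(1) cm by simp
            also have "\<dots> \<le> card {u\<in>?S. KA (p,q) u}"
            proof (rule card_mono)
              show "finite {u\<in>?S. KA (p,q) u}" using fS by simp
            next
              show "{u\<in>T. KA (r,c) u} \<subseteq> {u\<in>?S. KA (p,q) u}"
              proof (rule subsetI)
              fix u assume u: "u \<in> {u\<in>T. KA (r,c) u}"
              obtain a b where ab: "u = (a,b)" by force
              have "b = c \<and> a \<noteq> r" using u ab rowr by (auto simp: adj_iff)
              moreover have "a \<noteq> i" using u ab i calculation by auto
              ultimately show "u \<in> {u\<in>?S. KA (p,q) u}" using u ab True qc by (auto simp: adj_iff)
              qed
            qed
            finally show ?thesis .
          next
            case False
            have "2 \<le> card {u\<in>T. KA (p,q) u}" using d' pq by blast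
            also have "\<dots> = card ({u\<in>T. KA (p,q) u} - {(r,c)}) + 1"
            proof -
              have mem: "(r,c) \<in> {u\<in>T. KA (p,q) u}" using rcT pq qc by (simp add: adj_iff)
              have "finite {u\<in>T. KA (p,q) u}" using fT by simp
              from card_Suc_Diff1[OF this mem] show ?thesis by simp
            qed
            also have "\<dots> = card (insert (i,c) ({u\<in>T. KA (p,q) u} - {(r,c)}))"
              using i fT by (simp add: card_insert_if)
            also have "\<dots> \<le> card {u\<in>?S. KA (p,q) u}"
              using fS False qc by (intro card_mono) (auto simp: adj_iff)
            finally show ?thesis .
          qed
        qed
      qed
      have "gamma_2t_KK n m \<le> card ?S" using shrink[OF subS r(1) nr dS] .
      thus ?thesis using T cS by simp
    qed
  qed
qed

theorem mainTheorem6: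
  fixes n m :: nat
  assumes "2 \<le> n" and "n \<le> m"
    and "gamma_2t_KK n m < 2 * n"
  shows "gamma_2t_KK n m \<le> gamma_2t_KK (n + 1) m \<and> gamma_2t_KK (n + 1) m \<le> gamma_2t_KK n m + 1"
  using lower[OF assms] upper[OF assms] by simp

end
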